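(* Let $0\le\lambda<\gamma\le\delta$ and let $\mathfrak{f}=\mathfrak{s}+\overline{\mathfrak{t}}\in\mathcal{H}^0$. Then $\mathfrak{f}\in\mathcal{R}_H^0(\gamma,\delta,\lambda)$ if and only if $F_\epsilon=\mathfrak{s}+\epsilon\mathfrak{t}\in\mathcal{R}(\gamma,\delta,\lambda)$ for each $\epsilon\in\mathbb{C}$ with $|\epsilon|=1$.
   Context: Let $\mathcal{U}=\{z\in\mathbb{C}:|z|<1\}$. $\mathcal{H}^0$ denotes the class of complex-valued harmonic functions $\mathfrak{f}=\mathfrak{s}+\overline{\mathfrak{t}}$ on $\mathcal{U}$, where $\mathfrak{s}(z)=z+\sum_{m\ge2}a_mz^m$ and $\mathfrak{t}(z)=\sum_{m\ge2}b_mz^m$ are analytic in $\mathcal{U}$. $\mathcal{A}$ denotes the class of analytic functions $F$ in $\mathcal{U}$ with $F(0)=0$, $F'(0)=1$. For real $0\le\lambda<\gamma\le\delta$, $\mathcal{R}_H^0(\gamma,\delta,\lambda)$ is the class of $\mathfrak{f}=\mathfrak{s}+\overline{\mathfrak{t}}\in\mathcal{H}^0$ such that for all $z\in\mathcal{U}$, $\mathrm{Re}\left[\gamma\mathfrak{s}'(z)+\delta z\mathfrak{s}''(z)+\frac{\delta-\gamma}{2}z^2\mathfrak{s}'''(z)-\lambda\right]>\left|\gamma\mathfrak{t}'(z)+\delta z\mathfrak{t}''(z)+\frac{\delta-\gamma}{2}z^2\mathfrak{t}'''(z)\right|$, and $\mathcal{R}(\gamma,\delta,\lambda)$ is the class of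 $F\in\mathcal{A}$ such that $\mathrm{Re}\{\gamma F'(z)+\delta zF''(z)+\frac{\delta-\gamma}{2}z^2F'''(z)\}>\lambda$ for all $z\in\mathcal{U}$. *)

theory Defs
  imports "HOL-Complex_Analysis.Complex_Analysis"
begin

definition unit_disc :: "complex set" where
  "unit_disc = ball 0 1"

text \<open>The class H^0: pairs (s, t) of analytic functions on the unit disc with
  s(0) = 0, s'(0) = 1, t(0) = 0, t'(0) = 0; f = s + conj t.\<close>
definition H0 :: "(complex \<Rightarrow> complex) \<Rightarrow> (complex \<Rightarrow> complex) \<Rightarrow> bool" where
  "H0 s t \<longleftrightarrow> s holomorphic_on unit_disc \<and> t holomorphic_on unit_disc \<and>
     s 0 = 0 \<and> deriv s 0 = 1 \<and> t 0 = 0 \<and> deriv t 0 = 0"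

definition classA :: "(complex \<Rightarrow> complex) \<Rightarrow> bool" where
  "classA F \<longleftrightarrow> F holomorphic_on unit_disc \<and> F 0 = 0 \<and> deriv F 0 = 1"

definition Lop :: "real \<Rightarrow> real \<Rightarrow> (complex \<Rightarrow> complex) \<Rightarrow> complex \<Rightarrow> complex" where
  "Lop \<gamma> \<delta> g z = of_real \<gamma> * deriv g z + of_real \<delta> * z * (deriv ^^ 2) g z
      + of_real ((\<delta> - \<gamma>) / 2) * z ^ 2 * (deriv ^^ 3) g z"

definition RH0 :: "real \<Rightarrow> real \<Rightarrow> real \<Rightarrow> (complex \<Rightarrow> complex) \<Rightarrow> (complex \<Rightarrow> complex) \<Rightarrow> bool" where
  "RH0 \<gamma> \<delta> lam s t \<longleftrightarrow> H0 s t \<and>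
     (\<forall>z\<in>unit_disc. Re (Lop \<gamma> \<delta> s z - of_real lam) > cmod (Lop \<gamma> \<delta> t z))"

definition Rclass :: "real \<Rightarrow> real \<Rightarrow> real \<Rightarrow> (complex \<Rightarrow> complex) \<Rightarrow> bool" where
  "Rclass \<gamma> \<delta> lam F \<longleftrightarrow> classA F \<and> (\<forall>z\<in>unit_disc. Re (Lop \<gamma> \<delta> F z) > lam)"

end

theory Submission
  imports Defs
begin

lemma hd_lin:
  assumes s: "s holomorphic_on unit_disc" and t: "t holomorphic_on unit_disc" and z: "z \<in> unit_disc"
  shows "(deriv ^^ n) (\<lambda>w. s w + e * t w) z = (deriv ^^ n) s z + e * (deriv ^^ n) t z"
proof -
  have o: "open unit_disc" by (simp add: unit_disc_def)
  have et: "(\<lambda>w. e * t w) holomorphic_on unit_disc" using t by (intro holomorphic_intros)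
  have "(deriv ^^ n) (\<lambda>w. s w + e * t w) z = (deriv ^^ n) s z + (deriv ^^ n) (\<lambda>w. e * t w) z"
    by (rule higher_deriv_add[OF s et o z])
  also have "(deriv ^^ n) (\<lambda>w. e * t w) z = e * (deriv ^^ n) t z"
    by (rule higher_deriv_cmult[OF t z o])
  finally show ?thesis .
qed

lemma Lop_lin:
  assumes s: "s holomorphic_on unit_disc" and t: "t holomorphic_on unit_disc" and z: "z \<in> unit_disc"
  shows "Lop g d (\<lambda>w. s w + e * t w) z = Lop g d s z + e * Lop g d t z"
proof -
  have 1: "deriv (\<lambda>w. s w + e * t w) z = deriv s z + e * deriv t z"
    using hd_lin[OF s t z, of 1 e] by simp
  show ?thesis unfolding Lop_def 1 hd_lin[OF s t z] by (simp add: ring_distribs mult.left_commute)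
qed

theorem theorem2:
  fixes \<gamma> \<delta> lam :: real and s t :: "complex \<Rightarrow> complex"
  assumes "0 \<le> lam" and "lam < \<gamma>" and "\<gamma> \<le> \<delta>"
    and "H0 s t"
  shows "RH0 \<gamma> \<delta> lam s t \<longleftrightarrow>
         (\<forall>\<epsilon>::complex. cmod \<epsilon> = 1 \<longrightarrow> Rclass \<gamma> \<delta> lam (\<lambda>z. s z + \<epsilon> * t z))"
proof -
  have s: "s holomorphic_on unit_disc" and t: "t holomorphic_on unit_disc"
    and s0: "s 0 = 0" "deriv s 0 = 1" and t0: "t 0 = 0" "deriv t 0 = 0"
    using assms(4) by (auto simp: H0_def)
  have z0: "0 \<in> unit_disc" by (simp add: unit_disc_def)
  have cA: "classA (\<lambda>z. s z + e * t z)" for e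
  proof -
    have "deriv (\<lambda>w. s w + e * t w) 0 = deriv s 0 + e * deriv t 0"
      using hd_lin[OF s t z0, of 1 e] by simp
    then show ?thesis unfolding classA_def using s t s0 t0 by (auto intro!: holomorphic_intros)
  qed
  show ?thesis
  proof
    assume R: "RH0 \<gamma> \<delta> lam s t"
    show "\<forall>\<epsilon>::complex. cmod \<epsilon> = 1 \<longrightarrow> Rclass \<gamma> \<delta> lam (\<lambda>z. s z + \<epsilon> * t z)"
    proof (intro allI impI)
      fix e :: complex assume e: "cmod e = 1"
      have "lam < Re (Lop \<gamma> \<delta> (\<lambda>w. s w + e * t w) z)" if z: "z \<in> unit_disc" for z
      proof -
        have a: "Re (Lop \<gamma> \<delta> s z - of_real lam) > cmod (Lop \<gamma> \<delta> t z)" using R z by (auto simp: RH0_def)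
        have b: "Re (e * Lop \<gamma> \<delta> t z) \<ge> - cmod (e * Lop \<gamma> \<delta> t z)"
          using abs_Re_le_cmod[of "e * Lop \<gamma> \<delta> t z"] by linarith
        have c: "cmod (e * Lop \<gamma> \<delta> t z) = cmod (Lop \<gamma> \<delta> t z)" by (simp add: norm_mult e)
        show ?thesis unfolding Lop_lin[OF s t z] using a b c by simp
      qed
      then show "Rclass \<gamma> \<delta> lam (\<lambda>z. s z + e * t z)" using cA by (auto simp: Rclass_def)
    qed
  next
    assume A: "\<forall>\<epsilon>::complex. cmod \<epsilon> = 1 \<longrightarrow> Rclass \<gamma> \<delta> lam (\<lambda>z. s z + \<epsilon> * t z)"
    have "Re (Lop \<gamma> \<delta> s z - of_real lam) > cmod (Lop \<gamma> \<delta> t z)" if z: "z \<in> unit_disc" for z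
    proof -
      define L where "L = Lop \<gamma> \<delta> t z"
      define e where "e = (if L = 0 then -1 else - cnj L / of_real (cmod L))"
      have e1: "cmod e = 1" by (auto simp: e_def norm_divide)
      have eL: "e * L = - of_real (cmod L)"
        by (auto simp: e_def field_simps complex_norm_square[symmetric] power2_eq_square)
      have "lam < Re (Lop \<gamma> \<delta> (\<lambda>w. s w + e * t w) z)" using A e1 z by (auto simp: Rclass_def)
      then show ?thesis unfolding Lop_lin[OF s t z] L_def[symmetric] eL by simp
    qed
    then show "RH0 \<gamma> \<delta> lam s t" using assms(4) by (auto simp: RH0_def)
  qed
qed

end
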